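(* Let $\mathcal S$ and $\mathcal T$ be additive categories and let $T:\mathcal S\to\mathcal T$ be an additive functor. (a) If $T$ has a left adjoint $S_\ell$, then an object $Q$ of $\mathcal S$ is $T$-relative projective if and only if the counit $\eta_Q:S_\ell TQ\to Q$ of the adjunction is an epimorphism. Any object of $\mathrm{add}(\mathrm{im}(S_\ell))$ is $T$-relative projective. (b) If $T$ has a right adjoint $S_r$, then an object $Q$ of $\mathcal S$ is $T$-relative injective if and only if the unit $\epsilon_Q:Q\to S_rTQ$ of the adjunction is a monomorphism. Any object of $\mathrm{add}(\mathrm{im}(S_r))$ is $T$-relative injective.
   Context: An object $Q$ of $\mathcal S$ is $T$-relative projective if the natural transformation $\mathcal S(Q,-)\to\mathcal T(TQ,T-)$ induced by $T$ is injective (componentwise), and $T$-relative injective if the natural transformation $\mathcal S(-,Q)\to\mathcal T(T-,TQ)$ induced by $T$ is injective. $\mathrm{add}(\mathrm{im}(F))$ denotes the full subcategory of direct summands of finite direct sums of objects in the image of $F$. *)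

theory Defs
  imports Main
begin

text \<open>Categories with explicit object set, hom-sets (pairwise disjoint),
 composition (Comp g f = g after f) and identities, together with the
 preadditive structure (abelian group on each hom-set, bilinear composition).\<close>

record ('o, 'm) cat =
  Obj  :: "'o set"
  Hom  :: "'o \<Rightarrow> 'o \<Rightarrow> 'm set"
  Comp :: "'m \<Rightarrow> 'm \<Rightarrow> 'm"
  Id   :: "'o \<Rightarrow> 'm"
  Add  :: "'m \<Rightarrow> 'm \<Rightarrow> 'm"
  Neg  :: "'m \<Rightarrow> 'm"
  Zero :: "'o \<Rightarrow> 'o \<Rightarrow> 'm"

definition category :: "('o, 'm, 'x) cat_scheme \<Rightarrow> bool" where
  "category C \<longleftrightarrow>
     (\<forall>A B. (A \<notin> Obj C \<or> B \<notin> Obj C) \<longrightarrow> Hom C A B = {}) \<and>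
     (\<forall>A B A' B' f. f \<in> Hom C A B \<longrightarrow> f \<in> Hom C A' B' \<longrightarrow> A = A' \<and> B = B') \<and>
     (\<forall>A\<in>Obj C. Id C A \<in> Hom C A A) \<and>
     (\<forall>A B D f g. f \<in> Hom C A B \<longrightarrow> g \<in> Hom C B D \<longrightarrow> Comp C g f \<in> Hom C A D) \<and>
     (\<forall>A B D E f g h. f \<in> Hom C A B \<longrightarrow> g \<in> Hom C B D \<longrightarrow> h \<in> Hom C D E \<longrightarrow>
        Comp C h (Comp C g f) = Comp C (Comp C h g) f) \<and>
     (\<forall>A B f. f \<in> Hom C A B \<longrightarrow> Comp C (Id C B) f = f \<and> Comp C f (Id C A) = f)"

definition preadditive :: "('o, 'm, 'x) cat_scheme \<Rightarrow> bool" where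
  "preadditive C \<longleftrightarrow> category C \<and>
     (\<forall>A\<in>Obj C. \<forall>B\<in>Obj C.
        Zero C A B \<in> Hom C A B \<and>
        (\<forall>f\<in>Hom C A B. \<forall>g\<in>Hom C A B. Add C f g \<in> Hom C A B) \<and>
        (\<forall>f\<in>Hom C A B. Neg C f \<in> Hom C A B) \<and>
        (\<forall>f\<in>Hom C A B. \<forall>g\<in>Hom C A B. \<forall>h\<in>Hom C A B.
            Add C (Add C f g) h = Add C f (Add C g h)) \<and>
        (\<forall>f\<in>Hom C A B. \<forall>g\<in>Hom C A B. Add C f g = Add C g f) \<and>
        (\<forall>f\<in>Hom C A B. Add C f (Zero C A B) = f) \<and>
        (\<forall>f\<in>Hom C A B. Add C f (Neg C f) = Zero C A B)) \<and>
     (\<forall>A B D f g h. f \<in> Hom C A B \<longrightarrow> g \<in> Hom C A B \<longrightarrow> h \<in> Hom C B D \<longrightarrow>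
        Comp C h (Add C f g) = Add C (Comp C h f) (Comp C h g)) \<and>
     (\<forall>A B D f g h. f \<in> Hom C B D \<longrightarrow> g \<in> Hom C B D \<longrightarrow> h \<in> Hom C A B \<longrightarrow>
        Comp C (Add C f g) h = Add C (Comp C f h) (Comp C g h))"

definition zero_object :: "('o, 'm, 'x) cat_scheme \<Rightarrow> 'o \<Rightarrow> bool" where
  "zero_object C Z \<longleftrightarrow> Z \<in> Obj C \<and> Id C Z = Zero C Z Z"

definition biproduct :: "('o, 'm, 'x) cat_scheme \<Rightarrow> 'o \<Rightarrow> 'o \<Rightarrow> 'o \<Rightarrow> bool" where
  "biproduct C P A B \<longleftrightarrow> P \<in> Obj C \<and> A \<in> Obj C \<and> B \<in> Obj C \<and>
     (\<exists>i1 i2 p1 p2. i1 \<in> Hom C A P \<and> i2 \<in> Hom C B P \<and> p1 \<in> Hom C P A \<and> p2 \<in> Hom C P B \<and>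
        Comp C p1 i1 = Id C A \<and> Comp C p2 i2 = Id C B \<and>
        Comp C p2 i1 = Zero C A B \<and> Comp C p1 i2 = Zero C B A \<and>
        Add C (Comp C i1 p1) (Comp C i2 p2) = Id C P)"

definition additive :: "('o, 'm, 'x) cat_scheme \<Rightarrow> bool" where
  "additive C \<longleftrightarrow> preadditive C \<and> (\<exists>Z. zero_object C Z) \<and>
     (\<forall>A\<in>Obj C. \<forall>B\<in>Obj C. \<exists>P. biproduct C P A B)"

definition is_functor ::
  "('o, 'm, 'x) cat_scheme \<Rightarrow> ('p, 'n, 'y) cat_scheme \<Rightarrow> ('o \<Rightarrow> 'p) \<Rightarrow> ('m \<Rightarrow> 'n) \<Rightarrow> bool" where
  "is_functor C D Fo Fm \<longleftrightarrow>
     (\<forall>A\<in>Obj C. Fo A \<in> Obj D) \<and>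
     (\<forall>A B f. f \<in> Hom C A B \<longrightarrow> Fm f \<in> Hom D (Fo A) (Fo B)) \<and>
     (\<forall>A\<in>Obj C. Fm (Id C A) = Id D (Fo A)) \<and>
     (\<forall>A B E f g. f \<in> Hom C A B \<longrightarrow> g \<in> Hom C B E \<longrightarrow> Fm (Comp C g f) = Comp D (Fm g) (Fm f))"

definition additive_functor ::
  "('o, 'm, 'x) cat_scheme \<Rightarrow> ('p, 'n, 'y) cat_scheme \<Rightarrow> ('o \<Rightarrow> 'p) \<Rightarrow> ('m \<Rightarrow> 'n) \<Rightarrow> bool" where
  "additive_functor C D Fo Fm \<longleftrightarrow> is_functor C D Fo Fm \<and>
     (\<forall>A B f g. f \<in> Hom C A B \<longrightarrow> g \<in> Hom C A B \<longrightarrow> Fm (Add C f g) = Add D (Fm f) (Fm g))"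

definition adjunction ::
  "('o, 'm, 'x) cat_scheme \<Rightarrow> ('p, 'n, 'y) cat_scheme \<Rightarrow>
   ('p \<Rightarrow> 'o) \<Rightarrow> ('n \<Rightarrow> 'm) \<Rightarrow> ('o \<Rightarrow> 'p) \<Rightarrow> ('m \<Rightarrow> 'n) \<Rightarrow>
   ('p \<Rightarrow> 'n) \<Rightarrow> ('o \<Rightarrow> 'm) \<Rightarrow> bool" where
  "adjunction C D Lo Lm Ro Rm u c \<longleftrightarrow>
     is_functor D C Lo Lm \<and> is_functor C D Ro Rm \<and>
     (\<forall>X\<in>Obj D. u X \<in> Hom D X (Ro (Lo X))) \<and>
     (\<forall>X Y f. f \<in> Hom D X Y \<longrightarrow> Comp D (Rm (Lm f)) (u X) = Comp D (u Y) f) \<and>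
     (\<forall>Y\<in>Obj C. c Y \<in> Hom C (Lo (Ro Y)) Y) \<and>
     (\<forall>X Y f. f \<in> Hom C X Y \<longrightarrow> Comp C f (c X) = Comp C (c Y) (Lm (Rm f))) \<and>
     (\<forall>X\<in>Obj D. Comp C (c (Lo X)) (Lm (u X)) = Id C (Lo X)) \<and>
     (\<forall>Y\<in>Obj C. Comp D (Rm (c Y)) (u (Ro Y)) = Id D (Ro Y))"

definition cat_epi :: "('o, 'm, 'x) cat_scheme \<Rightarrow> 'm \<Rightarrow> bool" where
  "cat_epi C f \<longleftrightarrow> (\<exists>A B. f \<in> Hom C A B \<and>
     (\<forall>Y g h. g \<in> Hom C B Y \<longrightarrow> h \<in> Hom C B Y \<longrightarrow> Comp C g f = Comp C h f \<longrightarrow> g = h))"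

definition cat_mono :: "('o, 'm, 'x) cat_scheme \<Rightarrow> 'm \<Rightarrow> bool" where
  "cat_mono C f \<longleftrightarrow> (\<exists>A B. f \<in> Hom C A B \<and>
     (\<forall>Y g h. g \<in> Hom C Y A \<longrightarrow> h \<in> Hom C Y A \<longrightarrow> Comp C f g = Comp C f h \<longrightarrow> g = h))"

definition rel_projective ::
  "('o, 'm, 'x) cat_scheme \<Rightarrow> ('m \<Rightarrow> 'n) \<Rightarrow> 'o \<Rightarrow> bool" where
  "rel_projective S Tm Q \<longleftrightarrow> Q \<in> Obj S \<and> (\<forall>X\<in>Obj S. inj_on Tm (Hom S Q X))"

definition rel_injective ::
  "('o, 'm, 'x) cat_scheme \<Rightarrow> ('m \<Rightarrow> 'n) \<Rightarrow> 'o \<Rightarrow> bool" where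
  "rel_injective S Tm Q \<longleftrightarrow> Q \<in> Obj S \<and> (\<forall>X\<in>Obj S. inj_on Tm (Hom S X Q))"

inductive_set fin_sums_im ::
  "('o, 'm, 'x) cat_scheme \<Rightarrow> 'p set \<Rightarrow> ('p \<Rightarrow> 'o) \<Rightarrow> 'o set"
  for C :: "('o, 'm, 'x) cat_scheme" and ObjD :: "'p set" and Fo :: "'p \<Rightarrow> 'o" where
  zero: "zero_object C Z \<Longrightarrow> Z \<in> fin_sums_im C ObjD Fo"
| sum: "P \<in> fin_sums_im C ObjD Fo \<Longrightarrow> X \<in> ObjD \<Longrightarrow> biproduct C B P (Fo X)
        \<Longrightarrow> B \<in> fin_sums_im C ObjD Fo"

definition add_im :: "('o, 'm, 'x) cat_scheme \<Rightarrow> 'p set \<Rightarrow> ('p \<Rightarrow> 'o) \<Rightarrow> 'o set" where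
  "add_im C ObjD Fo = {Q. \<exists>P\<in>fin_sums_im C ObjD Fo. \<exists>Q'. biproduct C P Q Q'}"

end

theory Submission
  imports Defs
begin

lemma cat_parts1: assumes "category C" shows "\<forall>A B. (A \<notin> Obj C \<or> B \<notin> Obj C) \<longrightarrow> Hom C A B = {}"
  using assms[unfolded category_def] apply (elim conjE) by assumption

lemma cat_parts2: assumes "category C" shows "\<forall>A B A' B' f. f \<in> Hom C A B \<longrightarrow> f \<in> Hom C A' B' \<longrightarrow> A = A' \<and> B = B'"
  using assms[unfolded category_def] apply (elim conjE) by assumption

lemma cat_parts3: assumes "category C" shows "\<forall>A\<in>Obj C. Id C A \<in> Hom C A A"
  using assms[unfolded category_def] apply (elim conjE) by assumption

lemma cat_parts4: assumes "category C" shows "\<forall>A B D f g. f \<in> Hom C A B \<longrightarrow> g \<in> Hom C B D \<longrightarrow> Comp C g f \<in> Hom C A D"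
  using assms[unfolded category_def] apply (elim conjE) by assumption

lemma cat_parts5: assumes "category C" shows "\<forall>A B D E f g h. f \<in> Hom C A B \<longrightarrow> g \<in> Hom C B D \<longrightarrow> h \<in> Hom C D E \<longrightarrow>
        Comp C h (Comp C g f) = Comp C (Comp C h g) f"
  using assms[unfolded category_def] apply (elim conjE) by assumption

lemma cat_parts6: assumes "category C" shows "\<forall>A B f. f \<in> Hom C A B \<longrightarrow> Comp C (Id C B) f = f \<and> Comp C f (Id C A) = f"
  using assms[unfolded category_def] apply (elim conjE) by assumption

lemmas cat_parts = cat_parts1 cat_parts2 cat_parts3 cat_parts4 cat_parts5 cat_parts6

lemma catD1: "category C \<Longrightarrow> A \<notin> Obj C \<Longrightarrow> Hom C A B = {}"
  using cat_parts(1) by blast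
lemma catD2: "category C \<Longrightarrow> B \<notin> Obj C \<Longrightarrow> Hom C A B = {}"
  using cat_parts(1) by blast
lemma catD3: "category C \<Longrightarrow> f \<in> Hom C A B \<Longrightarrow> f \<in> Hom C A' B' \<Longrightarrow> A = A' \<and> B = B'"
  using cat_parts(2) by blast
lemma catD4: "category C \<Longrightarrow> A \<in> Obj C \<Longrightarrow> Id C A \<in> Hom C A A"
  using cat_parts(3) by blast
lemma catD5: "category C \<Longrightarrow> f \<in> Hom C A B \<Longrightarrow> g \<in> Hom C B D \<Longrightarrow> Comp C g f \<in> Hom C A D"
  using cat_parts(4) by blast
lemma catD6: "category C \<Longrightarrow> f \<in> Hom C A B \<Longrightarrow> g \<in> Hom C B D \<Longrightarrow> h \<in> Hom C D E \<Longrightarrow> Comp C h (Comp C g f) = Comp C (Comp C h g) f"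
  using cat_parts(5) by blast
lemma catD7: "category C \<Longrightarrow> f \<in> Hom C A B \<Longrightarrow> Comp C (Id C B) f = f"
  using cat_parts(6) by blast
lemma catD8: "category C \<Longrightarrow> f \<in> Hom C A B \<Longrightarrow> Comp C f (Id C A) = f"
  using cat_parts(6) by blast

lemmas catD = catD1 catD2 catD3 catD4 catD5 catD6 catD7 catD8

lemma hom_objs: "category C \<Longrightarrow> f \<in> Hom C A B \<Longrightarrow> A \<in> Obj C \<and> B \<in> Obj C"
  using catD1 catD2 by (metis emptyE)

lemma preadd_cat: "preadditive C \<Longrightarrow> category C"
  unfolding preadditive_def by (elim conjE)

lemma preadd_P: assumes "preadditive C" shows "\<forall>A\<in>Obj C. \<forall>B\<in>Obj C.
        Zero C A B \<in> Hom C A B \<and>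
        (\<forall>f\<in>Hom C A B. \<forall>g\<in>Hom C A B. Add C f g \<in> Hom C A B) \<and>
        (\<forall>f\<in>Hom C A B. Neg C f \<in> Hom C A B) \<and>
        (\<forall>f\<in>Hom C A B. \<forall>g\<in>Hom C A B. \<forall>h\<in>Hom C A B.
            Add C (Add C f g) h = Add C f (Add C g h)) \<and>
        (\<forall>f\<in>Hom C A B. \<forall>g\<in>Hom C A B. Add C f g = Add C g f) \<and>
        (\<forall>f\<in>Hom C A B. Add C f (Zero C A B) = f) \<and>
        (\<forall>f\<in>Hom C A B. Add C f (Neg C f) = Zero C A B)"
  using assms[unfolded preadditive_def] apply (elim conjE) by assumption

lemma preadd_L: assumes "preadditive C" shows "\<forall>A B D f g h. f \<in> Hom C A B \<longrightarrow> g \<in> Hom C A B \<longrightarrow> h \<in> Hom C B D \<longrightarrow>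
        Comp C h (Add C f g) = Add C (Comp C h f) (Comp C h g)"
  using assms[unfolded preadditive_def] apply (elim conjE) by assumption

lemma preadd_R: assumes "preadditive C" shows "\<forall>A B D f g h. f \<in> Hom C B D \<longrightarrow> g \<in> Hom C B D \<longrightarrow> h \<in> Hom C A B \<longrightarrow>
        Comp C (Add C f g) h = Add C (Comp C f h) (Comp C g h)"
  using assms[unfolded preadditive_def] apply (elim conjE) by assumption

lemma preadd_PD:
  assumes "preadditive C" "A \<in> Obj C" "B \<in> Obj C"
  shows "Zero C A B \<in> Hom C A B \<and>
        (\<forall>f\<in>Hom C A B. \<forall>g\<in>Hom C A B. Add C f g \<in> Hom C A B) \<and>
        (\<forall>f\<in>Hom C A B. Neg C f \<in> Hom C A B) \<and>
        (\<forall>f\<in>Hom C A B. \<forall>g\<in>Hom C A B. \<forall>h\<in>Hom C A B.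
            Add C (Add C f g) h = Add C f (Add C g h)) \<and>
        (\<forall>f\<in>Hom C A B. \<forall>g\<in>Hom C A B. Add C f g = Add C g f) \<and>
        (\<forall>f\<in>Hom C A B. Add C f (Zero C A B) = f) \<and>
        (\<forall>f\<in>Hom C A B. Add C f (Neg C f) = Zero C A B)"
  using bspec[OF bspec[OF preadd_P[OF assms(1)] assms(2)] assms(3)] .

lemma pa_zero: "preadditive C \<Longrightarrow> A \<in> Obj C \<Longrightarrow> B \<in> Obj C \<Longrightarrow> Zero C A B \<in> Hom C A B"
  using preadd_PD by (rule conjunct1)
lemma pa_neg: assumes "preadditive C" "f \<in> Hom C A B" shows "Neg C f \<in> Hom C A B"
proof -
  have "A \<in> Obj C" "B \<in> Obj C" using hom_objs[OF preadd_cat[OF assms(1)] assms(2)] by auto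
  from preadd_PD[OF assms(1) this] assms(2) show ?thesis by blast
qed
lemma pa_assoc: assumes "preadditive C" "f \<in> Hom C A B" "g \<in> Hom C A B" "h \<in> Hom C A B"
  shows "Add C (Add C f g) h = Add C f (Add C g h)"
proof -
  have "A \<in> Obj C" "B \<in> Obj C" using hom_objs[OF preadd_cat[OF assms(1)] assms(2)] by auto
  from preadd_PD[OF assms(1) this] assms(2-4) show ?thesis by blast
qed
lemma pa_rzero: assumes "preadditive C" "f \<in> Hom C A B" shows "Add C f (Zero C A B) = f"
proof -
  have "A \<in> Obj C" "B \<in> Obj C" using hom_objs[OF preadd_cat[OF assms(1)] assms(2)] by auto
  from preadd_PD[OF assms(1) this] assms(2) show ?thesis by blast
qed
lemma pa_rneg: assumes "preadditive C" "f \<in> Hom C A B" shows "Add C f (Neg C f) = Zero C A B"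
proof -
  have "A \<in> Obj C" "B \<in> Obj C" using hom_objs[OF preadd_cat[OF assms(1)] assms(2)] by auto
  from preadd_PD[OF assms(1) this] assms(2) show ?thesis by blast
qed
lemma pa_L: "preadditive C \<Longrightarrow> f \<in> Hom C A B \<Longrightarrow> g \<in> Hom C A B \<Longrightarrow> h \<in> Hom C B D \<Longrightarrow>
        Comp C h (Add C f g) = Add C (Comp C h f) (Comp C h g)"
  using preadd_L by blast
lemma pa_R: "preadditive C \<Longrightarrow> f \<in> Hom C B D \<Longrightarrow> g \<in> Hom C B D \<Longrightarrow> h \<in> Hom C A B \<Longrightarrow>
        Comp C (Add C f g) h = Add C (Comp C f h) (Comp C g h)"
  using preadd_R by blast

lemma idem_zero:
  assumes "preadditive C" "a \<in> Hom C A B" "Add C a a = a"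
  shows "a = Zero C A B"
proof -
  have "Zero C A B = Add C a (Neg C a)" using pa_rneg[OF assms(1,2)] by simp
  also have "\<dots> = Add C (Add C a a) (Neg C a)" using assms(3) by simp
  also have "\<dots> = Add C a (Add C a (Neg C a))"
    using pa_assoc[OF assms(1) assms(2) assms(2) pa_neg[OF assms(1,2)]] .
  also have "\<dots> = a" using pa_rzero[OF assms(1,2)] pa_rneg[OF assms(1,2)] by simp
  finally show ?thesis by simp
qed

lemma zero_hom_from:
  assumes "preadditive C" "zero_object C Z" "f \<in> Hom C Z X"
  shows "f = Zero C Z X"
proof -
  have cat: "category C" using preadd_cat[OF assms(1)] .
  have Z: "Z \<in> Obj C" "Id C Z = Zero C Z Z" using assms(2) unfolding zero_object_def by auto
  have z: "Zero C Z Z \<in> Hom C Z Z" using pa_zero[OF assms(1) Z(1) Z(1)] .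
  have zz: "Add C (Zero C Z Z) (Zero C Z Z) = Zero C Z Z" using pa_rzero[OF assms(1) z] .
  have a: "Comp C f (Zero C Z Z) \<in> Hom C Z X" using catD(5)[OF cat z assms(3)] .
  have "Add C (Comp C f (Zero C Z Z)) (Comp C f (Zero C Z Z)) = Comp C f (Zero C Z Z)"
    using pa_L[OF assms(1) z z assms(3)] zz by simp
  then have "Comp C f (Zero C Z Z) = Zero C Z X" using idem_zero[OF assms(1) a] by blast
  moreover have "Comp C f (Id C Z) = f" using catD(8)[OF cat assms(3)] .
  ultimately show ?thesis using Z by simp
qed

lemma zero_hom_to:
  assumes "preadditive C" "zero_object C Z" "f \<in> Hom C X Z"
  shows "f = Zero C X Z"
proof -
  have cat: "category C" using preadd_cat[OF assms(1)] .
  have Z: "Z \<in> Obj C" "Id C Z = Zero C Z Z" using assms(2) unfolding zero_object_def by auto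
  have z: "Zero C Z Z \<in> Hom C Z Z" using pa_zero[OF assms(1) Z(1) Z(1)] .
  have zz: "Add C (Zero C Z Z) (Zero C Z Z) = Zero C Z Z" using pa_rzero[OF assms(1) z] .
  have a: "Comp C (Zero C Z Z) f \<in> Hom C X Z" using catD(5)[OF cat assms(3) z] .
  have "Add C (Comp C (Zero C Z Z) f) (Comp C (Zero C Z Z) f) = Comp C (Zero C Z Z) f"
    using pa_R[OF assms(1) z z assms(3)] zz by simp
  then have "Comp C (Zero C Z Z) f = Zero C X Z" using idem_zero[OF assms(1) a] by blast
  moreover have "Comp C (Id C Z) f = f" using catD(7)[OF cat assms(3)] .
  ultimately show ?thesis using Z by simp
qed


lemma fun_obj: "is_functor C D Fo Fm \<Longrightarrow> A \<in> Obj C \<Longrightarrow> Fo A \<in> Obj D"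
  unfolding is_functor_def by (elim conjE) (erule bspec)
lemma fun_hom: "is_functor C D Fo Fm \<Longrightarrow> f \<in> Hom C A B \<Longrightarrow> Fm f \<in> Hom D (Fo A) (Fo B)"
  unfolding is_functor_def by (elim conjE) blast
lemma fun_id: "is_functor C D Fo Fm \<Longrightarrow> A \<in> Obj C \<Longrightarrow> Fm (Id C A) = Id D (Fo A)"
  unfolding is_functor_def by (elim conjE) blast
lemma fun_comp: "is_functor C D Fo Fm \<Longrightarrow> f \<in> Hom C A B \<Longrightarrow> g \<in> Hom C B E \<Longrightarrow>
   Fm (Comp C g f) = Comp D (Fm g) (Fm f)"
  unfolding is_functor_def by (elim conjE) blast

lemma adj_L: "adjunction C D L Lm R Rm u c \<Longrightarrow> is_functor D C L Lm"
  unfolding adjunction_def by (elim conjE)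
lemma adj_R: "adjunction C D L Lm R Rm u c \<Longrightarrow> is_functor C D R Rm"
  unfolding adjunction_def by (elim conjE)
lemma adj_u: "adjunction C D L Lm R Rm u c \<Longrightarrow> X \<in> Obj D \<Longrightarrow> u X \<in> Hom D X (R (L X))"
  unfolding adjunction_def by (elim conjE) blast
lemma adj_unat: "adjunction C D L Lm R Rm u c \<Longrightarrow> f \<in> Hom D X Y \<Longrightarrow>
   Comp D (Rm (Lm f)) (u X) = Comp D (u Y) f"
  unfolding adjunction_def by (elim conjE) blast
lemma adj_c: "adjunction C D L Lm R Rm u c \<Longrightarrow> Y \<in> Obj C \<Longrightarrow> c Y \<in> Hom C (L (R Y)) Y"
  unfolding adjunction_def by (elim conjE) blast
lemma adj_cnat: "adjunction C D L Lm R Rm u c \<Longrightarrow> f \<in> Hom C X Y \<Longrightarrow>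
   Comp C f (c X) = Comp C (c Y) (Lm (Rm f))"
  unfolding adjunction_def by (elim conjE) blast
lemma adj_tri1: "adjunction C D L Lm R Rm u c \<Longrightarrow> X \<in> Obj D \<Longrightarrow>
   Comp C (c (L X)) (Lm (u X)) = Id C (L X)"
  unfolding adjunction_def by (elim conjE) blast
lemma adj_tri2: "adjunction C D L Lm R Rm u c \<Longrightarrow> Y \<in> Obj C \<Longrightarrow>
   Comp D (Rm (c Y)) (u (R Y)) = Id D (R Y)"
  unfolding adjunction_def by (elim conjE) blast


lemma proj_iff_epi:
  assumes C: "category C" and D: "category D" and adj: "adjunction C D L Lm R Rm u c"
    and Q: "Q \<in> Obj C"
  shows "rel_projective C Rm Q \<longleftrightarrow> cat_epi C (c Q)"
proof
  have LF: "is_functor D C L Lm" using adj_L[OF adj] .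
  have RF: "is_functor C D R Rm" using adj_R[OF adj] .
  have cQ: "c Q \<in> Hom C (L (R Q)) Q" using adj_c[OF adj Q] .
  have RQ: "R Q \<in> Obj D" using fun_obj[OF RF Q] .
  have uRQ: "u (R Q) \<in> Hom D (R Q) (R (L (R Q)))" using adj_u[OF adj RQ] .
  have RcQ: "Rm (c Q) \<in> Hom D (R (L (R Q))) (R Q)" using fun_hom[OF RF cQ] .
  have tri: "Comp D (Rm (c Q)) (u (R Q)) = Id D (R Q)" using adj_tri2[OF adj Q] .
  {
    assume P: "rel_projective C Rm Q"
    show "cat_epi C (c Q)"
      unfolding cat_epi_def
    proof (intro exI conjI allI impI)
      show "c Q \<in> Hom C (L (R Q)) Q" by (fact cQ)
      fix Y g h assume g: "g \<in> Hom C Q Y" and h: "h \<in> Hom C Q Y" and eq: "Comp C g (c Q) = Comp C h (c Q)"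
      have Y: "Y \<in> Obj C" using hom_objs[OF C g] by blast
      have Rg: "Rm g \<in> Hom D (R Q) (R Y)" using fun_hom[OF RF g] .
      have Rh: "Rm h \<in> Hom D (R Q) (R Y)" using fun_hom[OF RF h] .
      have e1: "Comp D (Rm g) (Rm (c Q)) = Comp D (Rm h) (Rm (c Q))"
        using fun_comp[OF RF cQ g] fun_comp[OF RF cQ h] eq by simp
      have "Rm g = Comp D (Rm g) (Id D (R Q))" using catD8[OF D Rg] by simp
      also have "\<dots> = Comp D (Rm g) (Comp D (Rm (c Q)) (u (R Q)))" using tri by simp
      also have "\<dots> = Comp D (Comp D (Rm g) (Rm (c Q))) (u (R Q))" using catD6[OF D uRQ RcQ Rg] .
      also have "\<dots> = Comp D (Comp D (Rm h) (Rm (c Q))) (u (R Q))" using e1 by simp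
      also have "\<dots> = Comp D (Rm h) (Comp D (Rm (c Q)) (u (R Q)))" using catD6[OF D uRQ RcQ Rh] by simp
      also have "\<dots> = Rm h" using tri catD8[OF D Rh] by simp
      finally have "Rm g = Rm h" .
      then show "g = h" using P Y g h unfolding rel_projective_def inj_on_def by blast
    qed
  }
  {
    assume E: "cat_epi C (c Q)"
    then obtain A B where cAB: "c Q \<in> Hom C A B" and
      ep: "\<forall>Y g h. g \<in> Hom C B Y \<longrightarrow> h \<in> Hom C B Y \<longrightarrow> Comp C g (c Q) = Comp C h (c Q) \<longrightarrow> g = h"
      unfolding cat_epi_def by blast
    have B: "B = Q" using catD3[OF C cAB cQ] by blast
    show "rel_projective C Rm Q"
      unfolding rel_projective_def
    proof (intro conjI ballI inj_onI)
      show "Q \<in> Obj C" by (fact Q)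
      fix X f g assume X: "X \<in> Obj C" and f: "f \<in> Hom C Q X" and g: "g \<in> Hom C Q X" and eq: "Rm f = Rm g"
      have "Comp C f (c Q) = Comp C (c X) (Lm (Rm f))" using adj_cnat[OF adj f] .
      also have "\<dots> = Comp C (c X) (Lm (Rm g))" using eq by simp
      also have "\<dots> = Comp C g (c Q)" using adj_cnat[OF adj g] by simp
      finally show "f = g" using ep f g B by blast
    qed
  }
qed

lemma inj_iff_mono:
  assumes C: "category C" and D: "category D" and adj: "adjunction C D L Lm R Rm u c"
    and Q: "Q \<in> Obj D"
  shows "rel_injective D Lm Q \<longleftrightarrow> cat_mono D (u Q)"
proof
  have LF: "is_functor D C L Lm" using adj_L[OF adj] .
  have RF: "is_functor C D R Rm" using adj_R[OF adj] .
  have uQ: "u Q \<in> Hom D Q (R (L Q))" using adj_u[OF adj Q] .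
  have LQ: "L Q \<in> Obj C" using fun_obj[OF LF Q] .
  have cLQ: "c (L Q) \<in> Hom C (L (R (L Q))) (L Q)" using adj_c[OF adj LQ] .
  have LuQ: "Lm (u Q) \<in> Hom C (L Q) (L (R (L Q)))" using fun_hom[OF LF uQ] .
  have tri: "Comp C (c (L Q)) (Lm (u Q)) = Id C (L Q)" using adj_tri1[OF adj Q] .
  {
    assume P: "rel_injective D Lm Q"
    show "cat_mono D (u Q)"
      unfolding cat_mono_def
    proof (intro exI conjI allI impI)
      show "u Q \<in> Hom D Q (R (L Q))" by (fact uQ)
      fix Y g h assume g: "g \<in> Hom D Y Q" and h: "h \<in> Hom D Y Q" and eq: "Comp D (u Q) g = Comp D (u Q) h"
      have Y: "Y \<in> Obj D" using hom_objs[OF D g] by blast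
      have Lg: "Lm g \<in> Hom C (L Y) (L Q)" using fun_hom[OF LF g] .
      have Lh: "Lm h \<in> Hom C (L Y) (L Q)" using fun_hom[OF LF h] .
      have e1: "Comp C (Lm (u Q)) (Lm g) = Comp C (Lm (u Q)) (Lm h)"
        using fun_comp[OF LF g uQ] fun_comp[OF LF h uQ] eq by simp
      have "Lm g = Comp C (Id C (L Q)) (Lm g)" using catD7[OF C Lg] by simp
      also have "\<dots> = Comp C (Comp C (c (L Q)) (Lm (u Q))) (Lm g)" using tri by simp
      also have "\<dots> = Comp C (c (L Q)) (Comp C (Lm (u Q)) (Lm g))" using catD6[OF C Lg LuQ cLQ] by simp
      also have "\<dots> = Comp C (c (L Q)) (Comp C (Lm (u Q)) (Lm h))" using e1 by simp
      also have "\<dots> = Comp C (Comp C (c (L Q)) (Lm (u Q))) (Lm h)" using catD6[OF C Lh LuQ cLQ] .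
      also have "\<dots> = Lm h" using tri catD7[OF C Lh] by simp
      finally have "Lm g = Lm h" .
      then show "g = h" using P Y g h unfolding rel_injective_def inj_on_def by blast
    qed
  }
  {
    assume E: "cat_mono D (u Q)"
    then obtain A B where uAB: "u Q \<in> Hom D A B" and
      mo: "\<forall>Y g h. g \<in> Hom D Y A \<longrightarrow> h \<in> Hom D Y A \<longrightarrow> Comp D (u Q) g = Comp D (u Q) h \<longrightarrow> g = h"
      unfolding cat_mono_def by blast
    have A: "A = Q" using catD3[OF D uAB uQ] by blast
    show "rel_injective D Lm Q"
      unfolding rel_injective_def
    proof (intro conjI ballI inj_onI)
      show "Q \<in> Obj D" by (fact Q)
      fix X f g assume X: "X \<in> Obj D" and f: "f \<in> Hom D X Q" and g: "g \<in> Hom D X Q" and eq: "Lm f = Lm g"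
      have "Comp D (u Q) f = Comp D (Rm (Lm f)) (u X)" using adj_unat[OF adj f] by simp
      also have "\<dots> = Comp D (Rm (Lm g)) (u X)" using eq by simp
      also have "\<dots> = Comp D (u Q) g" using adj_unat[OF adj g] .
      finally show "f = g" using mo f g A by blast
    qed
  }
qed


lemma biprodE:
  assumes "biproduct C P A B"
  obtains i1 i2 p1 p2 where "P \<in> Obj C" "A \<in> Obj C" "B \<in> Obj C"
    "i1 \<in> Hom C A P" "i2 \<in> Hom C B P" "p1 \<in> Hom C P A" "p2 \<in> Hom C P B"
    "Comp C p1 i1 = Id C A" "Comp C p2 i2 = Id C B"
    "Add C (Comp C i1 p1) (Comp C i2 p2) = Id C P"
  using assms unfolding biproduct_def by blast

lemma proj_zero:
  assumes "preadditive C" "zero_object C Z"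
  shows "rel_projective C Fm Z"
  unfolding rel_projective_def
proof (intro conjI ballI inj_onI)
  show "Z \<in> Obj C" using assms(2) unfolding zero_object_def by blast
  fix X f g assume "f \<in> Hom C Z X" "g \<in> Hom C Z X"
  then show "f = g" using zero_hom_from[OF assms] by metis
qed

lemma inj_zero:
  assumes "preadditive C" "zero_object C Z"
  shows "rel_injective C Fm Z"
  unfolding rel_injective_def
proof (intro conjI ballI inj_onI)
  show "Z \<in> Obj C" using assms(2) unfolding zero_object_def by blast
  fix X f g assume "f \<in> Hom C X Z" "g \<in> Hom C X Z"
  then show "f = g" using zero_hom_to[OF assms] by metis
qed

lemma proj_summand:
  assumes C: "category C" and F: "is_functor C D Fo Fm" and bp: "biproduct C P A B"
    and PP: "rel_projective C Fm P"
  shows "rel_projective C Fm A"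
proof -
  obtain i1 i2 p1 p2 where o: "P \<in> Obj C" "A \<in> Obj C" "B \<in> Obj C"
    and m: "i1 \<in> Hom C A P" "i2 \<in> Hom C B P" "p1 \<in> Hom C P A" "p2 \<in> Hom C P B"
    and e: "Comp C p1 i1 = Id C A"
    using biprodE[OF bp] by metis
  show ?thesis unfolding rel_projective_def
  proof (intro conjI ballI inj_onI)
    show "A \<in> Obj C" by (fact o(2))
    fix X f g assume X: "X \<in> Obj C" and f: "f \<in> Hom C A X" and g: "g \<in> Hom C A X" and eq: "Fm f = Fm g"
    have fp: "Comp C f p1 \<in> Hom C P X" using catD5[OF C m(3) f] .
    have gp: "Comp C g p1 \<in> Hom C P X" using catD5[OF C m(3) g] .
    have "Fm (Comp C f p1) = Fm (Comp C g p1)" using fun_comp[OF F m(3) f] fun_comp[OF F m(3) g] eq by simp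
    then have E: "Comp C f p1 = Comp C g p1" using PP X fp gp unfolding rel_projective_def inj_on_def by blast
    have "f = Comp C f (Comp C p1 i1)" using catD8[OF C f] e by simp
    also have "\<dots> = Comp C (Comp C f p1) i1" using catD6[OF C m(1) m(3) f] .
    also have "\<dots> = Comp C (Comp C g p1) i1" using E by simp
    also have "\<dots> = Comp C g (Comp C p1 i1)" using catD6[OF C m(1) m(3) g] by simp
    also have "\<dots> = g" using catD8[OF C g] e by simp
    finally show "f = g" .
  qed
qed

lemma inj_summand:
  assumes C: "category C" and F: "is_functor C D Fo Fm" and bp: "biproduct C P A B"
    and PP: "rel_injective C Fm P"
  shows "rel_injective C Fm A"
proof -
  obtain i1 i2 p1 p2 where o: "P \<in> Obj C" "A \<in> Obj C" "B \<in> Obj C"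
    and m: "i1 \<in> Hom C A P" "i2 \<in> Hom C B P" "p1 \<in> Hom C P A" "p2 \<in> Hom C P B"
    and e: "Comp C p1 i1 = Id C A"
    using biprodE[OF bp] by metis
  show ?thesis unfolding rel_injective_def
  proof (intro conjI ballI inj_onI)
    show "A \<in> Obj C" by (fact o(2))
    fix X f g assume X: "X \<in> Obj C" and f: "f \<in> Hom C X A" and g: "g \<in> Hom C X A" and eq: "Fm f = Fm g"
    have fp: "Comp C i1 f \<in> Hom C X P" using catD5[OF C f m(1)] .
    have gp: "Comp C i1 g \<in> Hom C X P" using catD5[OF C g m(1)] .
    have "Fm (Comp C i1 f) = Fm (Comp C i1 g)" using fun_comp[OF F f m(1)] fun_comp[OF F g m(1)] eq by simp
    then have E: "Comp C i1 f = Comp C i1 g" using PP X fp gp unfolding rel_injective_def inj_on_def by blast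
    have "f = Comp C (Comp C p1 i1) f" using catD7[OF C f] e by simp
    also have "\<dots> = Comp C p1 (Comp C i1 f)" using catD6[OF C f m(1) m(3)] by simp
    also have "\<dots> = Comp C p1 (Comp C i1 g)" using E by simp
    also have "\<dots> = Comp C (Comp C p1 i1) g" using catD6[OF C g m(1) m(3)] .
    also have "\<dots> = g" using catD7[OF C g] e by simp
    finally show "f = g" .
  qed
qed

lemma proj_biprod:
  assumes C: "preadditive C" and F: "is_functor C D Fo Fm" and bp: "biproduct C P A B"
    and PA: "rel_projective C Fm A" and PB: "rel_projective C Fm B"
  shows "rel_projective C Fm P"
proof -
  have cat: "category C" using preadd_cat[OF C] .
  obtain i1 i2 p1 p2 where o: "P \<in> Obj C" "A \<in> Obj C" "B \<in> Obj C"
    and m: "i1 \<in> Hom C A P" "i2 \<in> Hom C B P" "p1 \<in> Hom C P A" "p2 \<in> Hom C P B"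
    and e: "Add C (Comp C i1 p1) (Comp C i2 p2) = Id C P"
    using biprodE[OF bp] by metis
  have ip1: "Comp C i1 p1 \<in> Hom C P P" using catD5[OF cat m(3) m(1)] .
  have ip2: "Comp C i2 p2 \<in> Hom C P P" using catD5[OF cat m(4) m(2)] .
  have decomp: "f = Add C (Comp C (Comp C f i1) p1) (Comp C (Comp C f i2) p2)"
    if f: "f \<in> Hom C P X" for f X
  proof -
    have "f = Comp C f (Id C P)" using catD8[OF cat f] by simp
    also have "\<dots> = Comp C f (Add C (Comp C i1 p1) (Comp C i2 p2))" using e by simp
    also have "\<dots> = Add C (Comp C f (Comp C i1 p1)) (Comp C f (Comp C i2 p2))"
      using pa_L[OF C ip1 ip2 f] .
    also have "\<dots> = Add C (Comp C (Comp C f i1) p1) (Comp C (Comp C f i2) p2)"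
      using catD6[OF cat m(3) m(1) f] catD6[OF cat m(4) m(2) f] by simp
    finally show ?thesis .
  qed
  show ?thesis unfolding rel_projective_def
  proof (intro conjI ballI inj_onI)
    show "P \<in> Obj C" by (fact o(1))
    fix X f g assume X: "X \<in> Obj C" and f: "f \<in> Hom C P X" and g: "g \<in> Hom C P X" and eq: "Fm f = Fm g"
    have "Fm (Comp C f i1) = Fm (Comp C g i1)" using fun_comp[OF F m(1) f] fun_comp[OF F m(1) g] eq by simp
    moreover have "Comp C f i1 \<in> Hom C A X" "Comp C g i1 \<in> Hom C A X"
      using catD5[OF cat m(1) f] catD5[OF cat m(1) g] by auto
    ultimately have E1: "Comp C f i1 = Comp C g i1" using PA X unfolding rel_projective_def inj_on_def by blast
    have "Fm (Comp C f i2) = Fm (Comp C g i2)" using fun_comp[OF F m(2) f] fun_comp[OF F m(2) g] eq by simp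
    moreover have "Comp C f i2 \<in> Hom C B X" "Comp C g i2 \<in> Hom C B X"
      using catD5[OF cat m(2) f] catD5[OF cat m(2) g] by auto
    ultimately have E2: "Comp C f i2 = Comp C g i2" using PB X unfolding rel_projective_def inj_on_def by blast
    show "f = g" using decomp[OF f] decomp[OF g] E1 E2 by simp
  qed
qed

lemma inj_biprod:
  assumes C: "preadditive C" and F: "is_functor C D Fo Fm" and bp: "biproduct C P A B"
    and PA: "rel_injective C Fm A" and PB: "rel_injective C Fm B"
  shows "rel_injective C Fm P"
proof -
  have cat: "category C" using preadd_cat[OF C] .
  obtain i1 i2 p1 p2 where o: "P \<in> Obj C" "A \<in> Obj C" "B \<in> Obj C"
    and m: "i1 \<in> Hom C A P" "i2 \<in> Hom C B P" "p1 \<in> Hom C P A" "p2 \<in> Hom C P B"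
    and e: "Add C (Comp C i1 p1) (Comp C i2 p2) = Id C P"
    using biprodE[OF bp] by metis
  have ip1: "Comp C i1 p1 \<in> Hom C P P" using catD5[OF cat m(3) m(1)] .
  have ip2: "Comp C i2 p2 \<in> Hom C P P" using catD5[OF cat m(4) m(2)] .
  have decomp: "f = Add C (Comp C i1 (Comp C p1 f)) (Comp C i2 (Comp C p2 f))"
    if f: "f \<in> Hom C X P" for f X
  proof -
    have "f = Comp C (Id C P) f" using catD7[OF cat f] by simp
    also have "\<dots> = Comp C (Add C (Comp C i1 p1) (Comp C i2 p2)) f" using e by simp
    also have "\<dots> = Add C (Comp C (Comp C i1 p1) f) (Comp C (Comp C i2 p2) f)"
      using pa_R[OF C ip1 ip2 f] .
    also have "\<dots> = Add C (Comp C i1 (Comp C p1 f)) (Comp C i2 (Comp C p2 f))"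
      using catD6[OF cat f m(3) m(1)] catD6[OF cat f m(4) m(2)] by simp
    finally show ?thesis .
  qed
  show ?thesis unfolding rel_injective_def
  proof (intro conjI ballI inj_onI)
    show "P \<in> Obj C" by (fact o(1))
    fix X f g assume X: "X \<in> Obj C" and f: "f \<in> Hom C X P" and g: "g \<in> Hom C X P" and eq: "Fm f = Fm g"
    have "Fm (Comp C p1 f) = Fm (Comp C p1 g)" using fun_comp[OF F f m(3)] fun_comp[OF F g m(3)] eq by simp
    moreover have "Comp C p1 f \<in> Hom C X A" "Comp C p1 g \<in> Hom C X A"
      using catD5[OF cat f m(3)] catD5[OF cat g m(3)] by auto
    ultimately have E1: "Comp C p1 f = Comp C p1 g" using PA X unfolding rel_injective_def inj_on_def by blast
    have "Fm (Comp C p2 f) = Fm (Comp C p2 g)" using fun_comp[OF F f m(4)] fun_comp[OF F g m(4)] eq by simp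
    moreover have "Comp C p2 f \<in> Hom C X B" "Comp C p2 g \<in> Hom C X B"
      using catD5[OF cat f m(4)] catD5[OF cat g m(4)] by auto
    ultimately have E2: "Comp C p2 f = Comp C p2 g" using PB X unfolding rel_injective_def inj_on_def by blast
    show "f = g" using decomp[OF f] decomp[OF g] E1 E2 by simp
  qed
qed


lemma proj_image:
  assumes C: "category C" and D: "category D" and adj: "adjunction C D L Lm R Rm u c"
    and X: "X \<in> Obj D"
  shows "rel_projective C Rm (L X)"
proof -
  have LF: "is_functor D C L Lm" using adj_L[OF adj] .
  have LX: "L X \<in> Obj C" using fun_obj[OF LF X] .
  have uX: "u X \<in> Hom D X (R (L X))" using adj_u[OF adj X] .
  have s: "Lm (u X) \<in> Hom C (L X) (L (R (L X)))" using fun_hom[OF LF uX] .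
  have e: "c (L X) \<in> Hom C (L (R (L X))) (L X)" using adj_c[OF adj LX] .
  have tri: "Comp C (c (L X)) (Lm (u X)) = Id C (L X)" using adj_tri1[OF adj X] .
  have "cat_epi C (c (L X))"
    unfolding cat_epi_def
  proof (intro exI conjI allI impI)
    show "c (L X) \<in> Hom C (L (R (L X))) (L X)" by (fact e)
    fix Y g h assume g: "g \<in> Hom C (L X) Y" and h: "h \<in> Hom C (L X) Y"
      and eq: "Comp C g (c (L X)) = Comp C h (c (L X))"
    have "g = Comp C g (Comp C (c (L X)) (Lm (u X)))" using catD8[OF C g] tri by simp
    also have "\<dots> = Comp C (Comp C g (c (L X))) (Lm (u X))" using catD6[OF C s e g] .
    also have "\<dots> = Comp C (Comp C h (c (L X))) (Lm (u X))" using eq by simp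
    also have "\<dots> = Comp C h (Comp C (c (L X)) (Lm (u X)))" using catD6[OF C s e h] by simp
    also have "\<dots> = h" using catD8[OF C h] tri by simp
    finally show "g = h" .
  qed
  then show ?thesis using proj_iff_epi[OF C D adj LX] by blast
qed

lemma inj_image:
  assumes C: "category C" and D: "category D" and adj: "adjunction C D L Lm R Rm u c"
    and Y: "Y \<in> Obj C"
  shows "rel_injective D Lm (R Y)"
proof -
  have RF: "is_functor C D R Rm" using adj_R[OF adj] .
  have RY: "R Y \<in> Obj D" using fun_obj[OF RF Y] .
  have cY: "c Y \<in> Hom C (L (R Y)) Y" using adj_c[OF adj Y] .
  have r: "Rm (c Y) \<in> Hom D (R (L (R Y))) (R Y)" using fun_hom[OF RF cY] .
  have m: "u (R Y) \<in> Hom D (R Y) (R (L (R Y)))" using adj_u[OF adj RY] .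
  have tri: "Comp D (Rm (c Y)) (u (R Y)) = Id D (R Y)" using adj_tri2[OF adj Y] .
  have "cat_mono D (u (R Y))"
    unfolding cat_mono_def
  proof (intro exI conjI allI impI)
    show "u (R Y) \<in> Hom D (R Y) (R (L (R Y)))" by (fact m)
    fix Z g h assume g: "g \<in> Hom D Z (R Y)" and h: "h \<in> Hom D Z (R Y)"
      and eq: "Comp D (u (R Y)) g = Comp D (u (R Y)) h"
    have "g = Comp D (Comp D (Rm (c Y)) (u (R Y))) g" using catD7[OF D g] tri by simp
    also have "\<dots> = Comp D (Rm (c Y)) (Comp D (u (R Y)) g)" using catD6[OF D g m r] by simp
    also have "\<dots> = Comp D (Rm (c Y)) (Comp D (u (R Y)) h)" using eq by simp
    also have "\<dots> = Comp D (Comp D (Rm (c Y)) (u (R Y))) h" using catD6[OF D h m r] .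
    also have "\<dots> = h" using catD7[OF D h] tri by simp
    finally show "g = h" .
  qed
  then show ?thesis using inj_iff_mono[OF C D adj RY] by blast
qed

lemma fin_sums_proj:
  assumes C: "preadditive C" and F: "is_functor C D Fo Fm"
    and img: "\<And>X. X \<in> ObjD \<Longrightarrow> rel_projective C Fm (G X)"
    and P: "P \<in> fin_sums_im C ObjD G"
  shows "rel_projective C Fm P"
  using P
proof (induction rule: fin_sums_im.induct)
  case (zero Z)
  then show ?case using proj_zero[OF C] by blast
next
  case (sum P X B)
  then show ?case using proj_biprod[OF C F] img by blast
qed

lemma fin_sums_inj:
  assumes C: "preadditive C" and F: "is_functor C D Fo Fm"
    and img: "\<And>X. X \<in> ObjD \<Longrightarrow> rel_injective C Fm (G X)"
    and P: "P \<in> fin_sums_im C ObjD G"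
  shows "rel_injective C Fm P"
  using P
proof (induction rule: fin_sums_im.induct)
  case (zero Z)
  then show ?case using inj_zero[OF C] by blast
next
  case (sum P X B)
  then show ?case using inj_biprod[OF C F] img by blast
qed

theorem lemma2p6:
  fixes S :: "('a, 'b) cat" and T :: "('c, 'd) cat"
    and To :: "'a \<Rightarrow> 'c" and Tm :: "'b \<Rightarrow> 'd"
  assumes "additive S" and "additive T" and "additive_functor S T To Tm"
  shows
   "(\<forall>(Slo :: 'c \<Rightarrow> 'a) (Slm :: 'd \<Rightarrow> 'b) u counit.
       adjunction S T Slo Slm To Tm u counit \<longrightarrow>
         (\<forall>Q\<in>Obj S. rel_projective S Tm Q \<longleftrightarrow> cat_epi S (counit Q)) \<and>
         (\<forall>Q\<in>add_im S (Obj T) Slo. rel_projective S Tm Q)) \<and>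
    (\<forall>(Sro :: 'c \<Rightarrow> 'a) (Srm :: 'd \<Rightarrow> 'b) unit c.
       adjunction T S To Tm Sro Srm unit c \<longrightarrow>
         (\<forall>Q\<in>Obj S. rel_injective S Tm Q \<longleftrightarrow> cat_mono S (unit Q)) \<and>
         (\<forall>Q\<in>add_im S (Obj T) Sro. rel_injective S Tm Q))"
proof -
  have PS: "preadditive S" using assms(1) unfolding additive_def by blast
  have PT: "preadditive T" using assms(2) unfolding additive_def by blast
  have CS: "category S" using preadd_cat[OF PS] .
  have CT: "category T" using preadd_cat[OF PT] .
  have F: "is_functor S T To Tm" using assms(3) unfolding additive_functor_def by blast
  show ?thesis
  proof (intro conjI allI impI ballI)
    fix Slo Slm u counit Q
    assume adj: "adjunction S T Slo Slm To Tm u counit" and Q: "Q \<in> Obj S"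
    show "rel_projective S Tm Q \<longleftrightarrow> cat_epi S (counit Q)" using proj_iff_epi[OF CS CT adj Q] .
  next
    fix Slo :: "'c \<Rightarrow> 'a" and Slm :: "'d \<Rightarrow> 'b" and u counit Q
    assume adj: "adjunction S T Slo Slm To Tm u counit" and Q: "Q \<in> add_im S (Obj T) Slo"
    then obtain P Q' where P: "P \<in> fin_sums_im S (Obj T) Slo" and bp: "biproduct S P Q Q'"
      unfolding add_im_def by blast
    have "rel_projective S Tm P"
      using fin_sums_proj[OF PS F _ P] proj_image[OF CS CT adj] by blast
    then show "rel_projective S Tm Q" using proj_summand[OF CS F bp] by blast
  next
    fix Sro Srm unit c Q
    assume adj: "adjunction T S To Tm Sro Srm unit c" and Q: "Q \<in> Obj S"
    show "rel_injective S Tm Q \<longleftrightarrow> cat_mono S (unit Q)" using inj_iff_mono[OF CT CS adj Q] .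
  next
    fix Sro :: "'c \<Rightarrow> 'a" and Srm :: "'d \<Rightarrow> 'b" and unit c Q
    assume adj: "adjunction T S To Tm Sro Srm unit c" and Q: "Q \<in> add_im S (Obj T) Sro"
    then obtain P Q' where P: "P \<in> fin_sums_im S (Obj T) Sro" and bp: "biproduct S P Q Q'"
      unfolding add_im_def by blast
    have "rel_injective S Tm P"
      using fin_sums_inj[OF PS F _ P] inj_image[OF CT CS adj] by blast
    then show "rel_injective S Tm Q" using inj_summand[OF CS F bp] by blast
  qed
qed

end
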